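(* Let $D\subset\mathbb{R}^2$ be a bounded domain invariant under rotation by $2\pi/N$ about the origin, for some even $N\ge4$. Let $T_\pm$ be invertible linear maps of $\mathbb{R}^2$ agreeing on the $x_1$-axis, with $T_\pm(\mathbb{R}^2_\pm)=\mathbb{R}^2_\pm$ and $\det T_+=\det T_-$, and let $T=T_+$ on $\{x_2\ge0\}$, $T=T_-$ on $\{x_2\le0\}$. Then \[ \frac14\big(\|T_+^{-1}\|_{HS}^2+\|T_-^{-1}\|_{HS}^2\big)=\frac{I_0(TD)}{A(TD)^3}\Big/\frac{I_0(D)}{A(D)^3}. \]
   Context: $\mathbb{R}^2_\pm=\{\pm x_2>0\}$. $A$ is area and $I_0(E)=\int_E|x|^2dx$ the moment of inertia about the origin. $\|M\|_{HS}=(\operatorname{tr}MM^\dagger)^{1/2}$. *)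

theory Defs
  imports "HOL-Analysis.Analysis"
begin

definition rot2 :: "real \<Rightarrow> real^2 \<Rightarrow> real^2" where
  "rot2 a x = (\<chi> i. if i = 1 then cos a * x$1 - sin a * x$2
                            else sin a * x$1 + cos a * x$2)"

definition upper_half :: "(real^2) set" where "upper_half = {x. x$2 > 0}"
definition lower_half :: "(real^2) set" where "lower_half = {x. x$2 < 0}"

definition area :: "(real^2) set \<Rightarrow> real" where "area E = measure lebesgue E"
definition inertia0 :: "(real^2) set \<Rightarrow> real" where
  "inertia0 E = integral E (\<lambda>x. norm x ^ 2)"

definition hs_norm :: "real^2^2 \<Rightarrow> real" where
  "hs_norm M = sqrt (\<Sum>i\<in>UNIV. \<Sum>j\<in>UNIV. (M$i$j)^2)"

definition pw_map :: "real^2^2 \<Rightarrow> real^2^2 \<Rightarrow> real^2 \<Rightarrow> real^2" where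
  "pw_map Tp Tm x = (if x$2 \<ge> 0 then Tp *v x else Tm *v x)"

end

theory Submission
  imports Defs
begin

lemma norm2_sq: "norm (x::real^2)^2 = x$1^2 + x$2^2"
  by (simp add: norm_vec_def L2_set_def UNIV_2)
lemma mvec2: "(M::real^2^2) *v x = vector [M$1$1*x$1 + M$1$2*x$2, M$2$1*x$1 + M$2$2*x$2]"
  by (simp add: matrix_vector_mult_def vec_eq_iff forall_2 UNIV_2 vector_def)
lemma mm2: "((A::real^2^2) ** B) $ i $ j = A$i$1*B$1$j + A$i$2*B$2$j"
  by (simp add: matrix_matrix_mult_def UNIV_2)
lemma mat1_2: "(mat 1 :: real^2^2) $ i $ j = (if i = j then 1 else 0)"
  by (simp add: mat_def)
lemma hs2: "hs_norm M ^ 2 = M$1$1^2 + M$1$2^2 + M$2$1^2 + M$2$2^2"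
  unfolding hs_norm_def by (simp add: UNIV_2 add_nonneg_nonneg)
lemma det_rot: "det (matrix (rot2 a)) = 1"
  by (simp add: det_2 matrix_def rot2_def axis_def power2_eq_square[symmetric])
lemma lin_rot: "linear (rot2 a)"
  unfolding rot2_def by (intro linearI) (auto simp: vec_eq_iff algebra_simps)
lemma rot_add: "rot2 a (rot2 b x) = rot2 (a+b) x"
  by (simp add: rot2_def vec_eq_iff cos_add sin_add algebra_simps)
lemma rot_pi: "rot2 pi x = - x"
  by (simp add: rot2_def vec_eq_iff forall_2)


lemma ai_cont:
  fixes f :: "real^2 \<Rightarrow> real"
  assumes "continuous_on UNIV f" "S \<in> lmeasurable" "bounded S"
  shows "f absolutely_integrable_on S"
proof -
  have "compact (f ` closure S)"
    using assms by (intro compact_continuous_image) (auto intro: continuous_on_subset simp: compact_closure)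
  then have "bounded (f ` S)"
    by (meson bounded_subset closure_subset compact_imp_bounded image_mono)
  then obtain B where B: "\<And>x. x \<in> S \<Longrightarrow> norm (f x) \<le> B"
    by (auto simp: bounded_iff)
  show ?thesis
  proof (rule measurable_bounded_by_integrable_imp_absolutely_integrable)
    show "f \<in> borel_measurable (lebesgue_on S)"
      using assms by (intro continuous_imp_measurable_on_sets_lebesgue) (auto intro: continuous_on_subset)
    show "S \<in> sets lebesgue" using assms by auto
    show "(\<lambda>x. B) integrable_on S" using assms integrable_on_const by blast
  qed (use B in auto)
qed

lemma int_lin:
  fixes f :: "real^2 \<Rightarrow> real"
  assumes "linear g" "continuous_on UNIV f" "S \<in> lmeasurable" "bounded S"
  shows "integral (g ` S) f = \<bar>det (matrix g)\<bar> * integral S (f \<circ> g)"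
proof -
  have cg: "continuous_on UNIV (f \<circ> g)"
  proof -
    have "continuous_on UNIV g" using linear_continuous_on assms(1) linear_conv_bounded_linear by blast
    then show ?thesis by (rule continuous_on_compose) (rule continuous_on_subset[OF assms(2)], simp)
  qed
  have "(f \<circ> g) absolutely_integrable_on S" using ai_cont[OF cg assms(3,4)] .
  then have "((\<lambda>x. vec (f x) :: real^1) \<circ> g) absolutely_integrable_on S"
    by (simp add: absolutely_integrable_on_1_iff o_def)
  then have "integral (g ` S) (\<lambda>x. vec (f x) :: real^1) = \<bar>det (matrix g)\<bar> *\<^sub>R integral S ((\<lambda>x. vec (f x) :: real^1) \<circ> g)"
    using assms(1) by (intro integral_change_of_variables_linear) auto
  then have "(integral (g ` S) (\<lambda>x. vec (f x) :: real^1))$1 = (\<bar>det (matrix g)\<bar> *\<^sub>R integral S ((\<lambda>x. vec (f x) :: real^1) \<circ> g))$1"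
    by simp
  moreover have v: "\<And>h T. integral T (\<lambda>x. vec (h x) :: real^1) $ 1 = integral T h"
    by (subst integral_on_1_eq) simp
  ultimately show ?thesis
    by (simp add: v o_def)
qed

lemma quad_int:
  fixes S :: "(real^2) set"
  assumes "S \<in> lmeasurable" "bounded S"
  shows "integral S (\<lambda>x. p*(x$1)^2 + r*(x$1*x$2) + t*(x$2)^2)
     = p*integral S (\<lambda>x. (x$1)^2) + r*integral S (\<lambda>x. x$1*x$2) + t*integral S (\<lambda>x. (x$2)^2)"
proof -
  have i: "f integrable_on S" if "continuous_on UNIV f" for f :: "real^2 \<Rightarrow> real"
    using ai_cont[OF that assms] set_lebesgue_integral_eq_integral(1) absolutely_integrable_on_def by blast
  have c1: "continuous_on UNIV (\<lambda>x::real^2. (x$1)^2)" "continuous_on UNIV (\<lambda>x::real^2. x$1*x$2)"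
     "continuous_on UNIV (\<lambda>x::real^2. (x$2)^2)"
    by (intro continuous_intros)+
  show ?thesis
  proof -
    have a: "(\<lambda>x. p*(x$1)^2) integrable_on S" "(\<lambda>x. r*(x$1*x$2)) integrable_on S" "(\<lambda>x. t*(x$2)^2) integrable_on S"
      using integrable_on_cmult_left[OF i[OF c1(1)], of p] integrable_on_cmult_left[OF i[OF c1(2)], of r]
        integrable_on_cmult_left[OF i[OF c1(3)], of t] by auto
    have "integral S (\<lambda>x. p*(x$1)^2 + r*(x$1*x$2) + t*(x$2)^2) = integral S (\<lambda>x. p*(x$1)^2 + r*(x$1*x$2)) + integral S (\<lambda>x. t*(x$2)^2)"
      using a by (intro integral_add integrable_add) auto
    also have "\<dots> = integral S (\<lambda>x. p*(x$1)^2) + integral S (\<lambda>x. r*(x$1*x$2)) + integral S (\<lambda>x. t*(x$2)^2)"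
      using a by (subst integral_add) auto
    finally show ?thesis by simp
  qed
qed


lemma int_rot:
  fixes q :: "real^2 \<Rightarrow> real"
  assumes "D \<in> lmeasurable" "bounded D" "rot2 a ` D = D" "continuous_on UNIV q"
  shows "integral D q = integral D (\<lambda>x. q (rot2 a x))"
  using int_lin[OF lin_rot assms(4,1,2), of a] assms(3) by (simp add: det_rot o_def)

lemma iso:
  fixes D :: "(real^2) set"
  assumes D: "D \<in> lmeasurable" "bounded D" "rot2 a ` D = D" and s: "sin a \<noteq> 0"
  shows "integral D (\<lambda>x. (x$1)^2) = integral D (\<lambda>x. (x$2)^2)" "integral D (\<lambda>x. x$1*x$2) = 0"
proof -
  define c s where "c = cos a" and "s = sin a"
  define A B C where "A = integral D (\<lambda>x. (x$1)^2)" and "B = integral D (\<lambda>x. (x$2)^2)"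
    and "C = integral D (\<lambda>x. x$1*x$2)"
  have cs: "c^2 + s^2 = 1" by (simp add: c_def s_def)
  have "A = integral D (\<lambda>x. (rot2 a x $1)^2)"
    unfolding A_def by (rule int_rot[OF D]) (intro continuous_intros)
  also have "\<dots> = integral D (\<lambda>x. c^2*(x$1)^2 + (- (2*c* s))*(x$1*x$2) + s^2*(x$2)^2)"
    by (rule integral_cong) (simp add: rot2_def c_def s_def power2_eq_square algebra_simps)
  also have "\<dots> = c^2*A + (- (2*c* s))*C + s^2*B"
    unfolding A_def B_def C_def by (rule quad_int[OF D(1,2)])
  finally have e1: "A = c^2*A + (- (2*c* s))*C + s^2*B" .
  have "C = integral D (\<lambda>x. rot2 a x $1 * rot2 a x $ 2)"
    unfolding C_def by (rule int_rot[OF D]) (intro continuous_intros)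
  also have "\<dots> = integral D (\<lambda>x. (c* s)*(x$1)^2 + (c^2 - s^2)*(x$1*x$2) + (- (c* s))*(x$2)^2)"
    by (rule integral_cong) (simp add: rot2_def c_def s_def power2_eq_square algebra_simps)
  also have "\<dots> = (c* s)*A + (c^2 - s^2)*C + (- (c* s))*B"
    unfolding A_def B_def C_def by (rule quad_int[OF D(1,2)])
  finally have e3: "C = (c* s)*A + (c^2 - s^2)*C + (- (c* s))*B" .
  have sn: "s \<noteq> 0" using s by (simp add: s_def)
  have c2: "c^2 = 1 - s^2" using cs by simp
  have "s^2*(A-B) = -2*c* s*C" using e1 unfolding c2 by (simp add: algebra_simps)
  then have "s*(s*(A-B) + 2*c*C) = 0" by (simp add: power2_eq_square algebra_simps)
  then have f1: "s*(A-B) = -2*c*C" using sn by simp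
  have "2* s^2*C = c* s*(A-B)" using e3 unfolding c2 by (simp add: algebra_simps)
  then have "s*(2* s*C - c*(A-B)) = 0" by (simp add: power2_eq_square algebra_simps)
  then have f2: "2* s*C = c*(A-B)" using sn by simp
  have "(A-B)*(s^2+c^2) = s*(s*(A-B)) + c*(c*(A-B))" by (simp add: algebra_simps power2_eq_square)
  also have "\<dots> = s*(-2*c*C) + c*(2* s*C)" using f1 f2 by simp
  also have "\<dots> = 0" by (simp add: algebra_simps)
  finally have "A = B" using cs by (simp add: add.commute)
  then have "C = 0" using f2 sn by simp
  show "A = B" "C = 0" by fact+
qed


lemma lmeas_inter:
  fixes D :: "(real^2) set"
  assumes "D \<in> lmeasurable" "bounded D"
  shows "D \<inter> {x. 0 \<le> x$2} \<in> lmeasurable" "D \<inter> {x. x$2 < 0} \<in> lmeasurable" "D \<inter> {x. 0 < x$2} \<in> lmeasurable"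
proof -
  have o: "open {x::real^2. x$2 < 0}" "open {x::real^2. 0 < x$2}"
    by (auto intro!: open_Collect_less continuous_intros)
  have c: "closed {x::real^2. 0 \<le> x$2}"
    by (auto intro!: closed_Collect_le continuous_intros)
  show "D \<inter> {x. 0 \<le> x$2} \<in> lmeasurable" "D \<inter> {x. x$2 < 0} \<in> lmeasurable" "D \<inter> {x. 0 < x$2} \<in> lmeasurable"
  proof -
    have bl: "\<And>S. S \<in> sets borel \<Longrightarrow> S \<in> sets (lebesgue :: (real^2) measure)"
      by (metis sets_completionI_sets sets_lborel)
    have D: "D \<in> sets lebesgue" using assms by auto
    show "D \<inter> {x. 0 \<le> x$2} \<in> lmeasurable" "D \<inter> {x. x$2 < 0} \<in> lmeasurable" "D \<inter> {x. 0 < x$2} \<in> lmeasurable"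
      using sets.Int[OF D bl[OF borel_closed[OF c]]] sets.Int[OF D bl[OF borel_open[OF o(1)]]]
        sets.Int[OF D bl[OF borel_open[OF o(2)]]] assms(2)
      by (auto intro!: bounded_set_imp_lmeasurable bounded_Int)
  qed
qed

lemma half:
  fixes D :: "(real^2) set" and q :: "real^2 \<Rightarrow> real"
  assumes D: "D \<in> lmeasurable" "bounded D" "uminus ` D = D"
    and q: "continuous_on UNIV q" "\<And>x. q (-x) = q x"
  shows "integral (D \<inter> {x. 0 \<le> x$2}) q = integral D q / 2"
    "integral (D \<inter> {x. x$2 < 0}) q = integral D q / 2"
proof -
  define U L U' where "U = D \<inter> {x. 0 \<le> x$2}" and "L = D \<inter> {x. x$2 < 0}" and "U' = D \<inter> {x. 0 < x$2}"
  have m: "U \<in> lmeasurable" "L \<in> lmeasurable" "U' \<in> lmeasurable"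
    using lmeas_inter[OF D(1,2)] by (auto simp: U_def L_def U'_def)
  have b: "bounded U" "bounded L" by (auto simp: U_def L_def intro: bounded_Int D(2))
  have neg: "\<And>x. x \<in> D \<Longrightarrow> -x \<in> D" using D(3) by force
  have "U' = uminus ` L"
  proof
    show "U' \<subseteq> uminus ` L"
    proof
      fix x assume "x \<in> U'"
      then have "-x \<in> L" using neg by (auto simp: U'_def L_def)
      then show "x \<in> uminus ` L" by (metis image_eqI minus_minus)
    qed
    show "uminus ` L \<subseteq> U'" using neg by (auto simp: U'_def L_def)
  qed
  also have "\<dots> = rot2 pi ` L" by (simp add: rot_pi)
  finally have "integral U' q = integral L (\<lambda>x. q (rot2 pi x))"
    using int_lin[OF lin_rot q(1) m(2) b(2), of pi] by (simp add: det_rot o_def)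
  then have e1: "integral U' q = integral L q" by (simp add: rot_pi q(2))
  have e2: "integral U q = integral U' q"
    by (rule integral_spike_set; rule negligible_subset[OF negligible_standard_hyperplane_cart[of 2]])
       (auto simp: U_def U'_def)
  have "integral D q = integral (U \<union> L) q"
    by (rule arg_cong[where f="\<lambda>S. integral S q"]) (auto simp: U_def L_def)
  also have "\<dots> = integral U q + integral L q"
  proof (rule integral_Un)
    show "q integrable_on U" "q integrable_on L"
      using ai_cont[OF q(1) m(1) b(1)] ai_cont[OF q(1) m(2) b(2)]
        set_lebesgue_integral_eq_integral(1) absolutely_integrable_on_def by blast+
    have "U \<inter> L = {}" by (auto simp: U_def L_def)
    then show "negligible (U \<inter> L)" by simp
  qed
  finally show "integral U q = integral D q / 2" "integral L q = integral D q / 2"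
    using e1 e2 by auto
qed


lemma hs_inv:
  fixes M :: "real^2^2"
  assumes "invertible M"
  shows "hs_norm (matrix_inv M) ^ 2 = hs_norm M ^ 2 / (det M)^2"
proof -
  define d where "d = det M"
  have d: "d \<noteq> 0" using assms by (simp add: d_def invertible_det_nz)
  define B where "B = matrix_inv M"
  have BM: "M ** B = mat 1 \<and> B ** M = mat 1"
    using assms unfolding B_def matrix_inv_def invertible_def by (rule someI_ex)
  define B' :: "real^2^2" where "B' = (\<chi> i j. if i = 1 then (if j = 1 then M$2$2/d else -M$1$2/d)
     else (if j = 1 then -M$2$1/d else M$1$1/d))"
  have B'e: "B'$1$1 = M$2$2/d" "B'$1$2 = -M$1$2/d" "B'$2$1 = -M$2$1/d" "B'$2$2 = M$1$1/d"
    by (simp_all add: B'_def)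
  have dd: "M$1$1 * M$2$2 - M$1$2 * M$2$1 = d" by (simp add: d_def det_2)
  have "M ** B' = mat 1"
    unfolding vec_eq_iff forall_2 mm2 mat1_2 B'e using d dd
    by (simp add: field_simps)
  then have "B = B'"
    by (metis BM matrix_mul_assoc matrix_mul_lid matrix_mul_rid)
  then have "hs_norm (matrix_inv M) ^ 2 = B'$1$1^2 + B'$1$2^2 + B'$2$1^2 + B'$2$2^2"
    by (simp add: B_def hs2)
  also have "\<dots> = (M$1$1^2 + M$1$2^2 + M$2$1^2 + M$2$2^2) / d^2"
    unfolding B'e by (simp add: power_divide add_divide_distrib)
  finally show ?thesis by (simp add: hs2 d_def)
qed


lemma half_mat:
  fixes M :: "real^2^2"
  assumes "(\<lambda>x. M *v x) ` upper_half = upper_half"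
  shows "M$2$1 = 0" "M$2$2 > 0"
proof -
  have up: "\<And>x. x$2 > 0 \<Longrightarrow> (M *v x)$2 > 0"
    using assms unfolding upper_half_def by blast
  show "M$2$1 = 0"
  proof (rule ccontr)
    assume a: "M$2$1 \<noteq> 0"
    have "(M *v vector [-(\<bar>M$2$2\<bar>+1)/M$2$1, 1])$2 > 0" by (rule up) simp
    then show False using a by (simp add: mvec2) 
  qed
  show "M$2$2 > 0" using up[of "vector [0,1]"] by (simp add: mvec2)
qed

lemma half_mat':
  fixes M :: "real^2^2"
  assumes "(\<lambda>x. M *v x) ` lower_half = lower_half"
  shows "M$2$1 = 0" "M$2$2 > 0"
proof -
  have lo: "\<And>x. x$2 < 0 \<Longrightarrow> (M *v x)$2 < 0"
    using assms unfolding lower_half_def by blast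
  show "M$2$1 = 0"
  proof (rule ccontr)
    assume a: "M$2$1 \<noteq> 0"
    have "(M *v vector [(\<bar>M$2$2\<bar>+1)/M$2$1, -1])$2 < 0" by (rule lo) simp
    then show False using a by (simp add: mvec2) 
  qed
  show "M$2$2 > 0" using lo[of "vector [0,-1]"] by (simp add: mvec2)
qed



lemma rot_iter:
  assumes "rot2 a ` D = D"
  shows "rot2 (real k * a) ` D = D"
proof (induction k)
  case 0
  have "rot2 0 = id" by (simp add: rot2_def fun_eq_iff vec_eq_iff forall_2)
  then show ?case by simp
next
  case (Suc k)
  have "rot2 (real (Suc k) * a) = rot2 a \<circ> rot2 (real k * a)"
    by (simp add: fun_eq_iff rot_add algebra_simps)
  then show ?case using Suc assms by (metis image_comp)
qed



lemma pos_ball: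
  fixes D :: "(real^2) set"
  assumes "open D" "D \<noteq> {}"
  obtains c \<rho> where "c \<noteq> 0" "0 < \<rho>" "cball c \<rho> \<subseteq> D" "\<rho> \<le> norm c / 2"
proof -
  obtain c0 where c0: "c0 \<in> D" using assms by auto
  then obtain r where r: "r > 0" "ball c0 r \<subseteq> D" using assms openE by blast
  define c where "c = (if c0 = 0 then c0 + (r/2) *\<^sub>R axis 1 1 else c0)"
  have cb: "c \<in> ball c0 r" using r by (auto simp: c_def dist_norm)
  have cn: "c \<noteq> 0" using r by (auto simp: c_def axis_eq_0_iff)
  obtain r0 where r0: "r0 > 0" "ball c r0 \<subseteq> ball c0 r" using cb openE[OF open_ball] by blast
  define \<rho> where "\<rho> = min (r0/2) (norm c / 2)"
  have "cball c \<rho> \<subseteq> ball c r0" using r0 by (auto simp: \<rho>_def)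
  then show ?thesis
    using that[of c \<rho>] cn r0 r by (auto simp: \<rho>_def)
qed

theorem mainTheorem12:
  fixes D :: "(real^2) set" and N :: nat and Tp Tm :: "real^2^2"
  assumes "open D" and "connected D" and "D \<noteq> {}" and "bounded D"
    and "even N" and "N \<ge> 4"
    and "rot2 (2 * pi / real N) ` D = D"
    and "invertible Tp" and "invertible Tm"
    and "\<And>t. Tp *v (vector [t, 0]) = Tm *v (vector [t, 0])"
    and "(\<lambda>x. Tp *v x) ` upper_half = upper_half"
    and "(\<lambda>x. Tm *v x) ` lower_half = lower_half"
    and "det Tp = det Tm"
  shows "(hs_norm (matrix_inv Tp) ^ 2 + hs_norm (matrix_inv Tm) ^ 2) / 4
         = (inertia0 (pw_map Tp Tm ` D) / area (pw_map Tp Tm ` D) ^ 3)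
           / (inertia0 D / area D ^ 3)"
proof -
  note opn = assms(1) and ne = assms(3) and bd = assms(4)
  have Dm: "D \<in> lmeasurable" using lmeasurable_open opn bd by blast
  define \<theta> where "\<theta> = 2 * pi / real N"
  have N0: "real N > 0" using assms(6) by simp
  have sinpos: "sin \<theta> \<noteq> 0"
  proof -
    have "0 < \<theta>" using N0 by (simp add: \<theta>_def)
    moreover have "\<theta> < pi" using assms(6) N0 by (simp add: \<theta>_def field_simps)
    ultimately show ?thesis using sin_gt_zero by force
  qed
  obtain m where m: "N = 2*m" using assms(5) by blast
  have "real m * \<theta> = pi" using N0 by (simp add: \<theta>_def m field_simps)
  then have "rot2 pi ` D = D" using rot_iter[of \<theta> D m] assms(7) by (simp add: \<theta>_def)
  then have negD: "uminus ` D = D" by (simp add: rot_pi)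
  have isoD: "integral D (\<lambda>x. (x$1)^2) = integral D (\<lambda>x. (x$2)^2)" "integral D (\<lambda>x. x$1*x$2) = 0"
    using iso[OF Dm bd _ sinpos] assms(7) by (simp_all add: \<theta>_def)
  define a where "a = integral D (\<lambda>x. (x$1)^2)"
  define U L where "U = D \<inter> {x. 0 \<le> x$2}" and "L = D \<inter> {x. x$2 < 0}"
  have UL: "U \<in> lmeasurable" "L \<in> lmeasurable" "bounded U" "bounded L"
    using lmeas_inter[OF Dm bd] bd by (auto simp: U_def L_def intro: bounded_Int)
  have hU: "integral U (\<lambda>x. (x$1)^2) = a/2" "integral U (\<lambda>x. (x$2)^2) = a/2" "integral U (\<lambda>x. x$1*x$2) = 0"
    "integral L (\<lambda>x. (x$1)^2) = a/2" "integral L (\<lambda>x. (x$2)^2) = a/2" "integral L (\<lambda>x. x$1*x$2) = 0"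
  proof -
    have cc: "continuous_on UNIV (\<lambda>x::real^2. (x$1)^2)" "continuous_on UNIV (\<lambda>x::real^2. (x$2)^2)"
      "continuous_on UNIV (\<lambda>x::real^2. x$1*x$2)" by (intro continuous_intros)+
    have ev: "\<And>x::real^2. (-x)$1^2 = x$1^2" "\<And>x::real^2. (-x)$2^2 = x$2^2"
      "\<And>x::real^2. (-x)$1*(-x)$2 = x$1*x$2" by simp_all
    show "integral U (\<lambda>x. (x$1)^2) = a/2" "integral U (\<lambda>x. (x$2)^2) = a/2" "integral U (\<lambda>x. x$1*x$2) = 0"
    "integral L (\<lambda>x. (x$1)^2) = a/2" "integral L (\<lambda>x. (x$2)^2) = a/2" "integral L (\<lambda>x. x$1*x$2) = 0"
      using half[OF Dm bd negD cc(1) ev(1)] half[OF Dm bd negD cc(2) ev(2)]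
        half[OF Dm bd negD cc(3) ev(3)] isoD
      by (simp_all add: U_def L_def a_def)
  qed
  have intg: "f integrable_on S" if "continuous_on UNIV f" "S \<in> lmeasurable" "bounded S" for f :: "real^2 \<Rightarrow> real" and S
    using ai_cont[OF that] set_lebesgue_integral_eq_integral(1) absolutely_integrable_on_def by blast
  have nsq_c: "continuous_on UNIV (\<lambda>x::real^2. norm x ^ 2)" by (intro continuous_intros)
  have ID: "inertia0 D = 2*a"
  proof -
    have "inertia0 D = integral D (\<lambda>x. (x$1)^2 + (x$2)^2)" unfolding inertia0_def by (simp add: norm2_sq)
    also have "\<dots> = integral D (\<lambda>x. (x$1)^2) + integral D (\<lambda>x. (x$2)^2)"
      by (rule integral_add; rule intg[OF _ Dm bd]; intro continuous_intros)
    finally show ?thesis using isoD by (simp add: a_def)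
  qed
  obtain c \<rho> where cr: "c \<noteq> 0" "0 < \<rho>" "cball c \<rho> \<subseteq> D" "\<rho> \<le> norm c / 2"
    using pos_ball[OF opn ne] by blast
  have cbm: "measure lebesgue (cball c \<rho>) > 0"
    using content_cball_pos[OF cr(2), of c] by (simp add: measure_completion)
  have muD: "area D > 0"
  proof -
    have "measure lebesgue (cball c \<rho>) \<le> measure lebesgue D"
      using cr(3) Dm by (intro measure_mono_fmeasurable) auto
    then show ?thesis using cbm unfolding area_def by linarith
  qed
  have IDpos: "inertia0 D > 0"
  proof -
    have "integral (cball c \<rho>) (\<lambda>x. (norm c / 2)^2) \<le> integral (cball c \<rho>) (\<lambda>x. norm x ^ 2)"
    proof (rule integral_le)
      show "(\<lambda>x. (norm c / 2)^2) integrable_on cball c \<rho>" by (rule intg) auto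
      show "(\<lambda>x. norm x ^ 2) integrable_on cball c \<rho>" by (rule intg[OF nsq_c]) auto
      fix x assume "x \<in> cball c \<rho>"
      then have "norm (c - x) \<le> \<rho>" by (simp add: dist_norm)
      then have "norm c / 2 \<le> norm x" using cr(4) norm_triangle_sub[of c x] by linarith
      then show "(norm c / 2)^2 \<le> norm x ^ 2" by (intro power_mono) auto
    qed
    also have "\<dots> \<le> inertia0 D" unfolding inertia0_def
      by (rule integral_subset_le[OF cr(3)]) (auto intro: intg[OF nsq_c] Dm bd)
    finally have "integral (cball c \<rho>) (\<lambda>x. (norm c / 2)^2) \<le> inertia0 D" .
    moreover have "integral (cball c \<rho>) (\<lambda>x. (norm c / 2)^2) = measure lebesgue (cball c \<rho>) * (norm c / 2)^2"
      using lmeasure_integral[of "cball c \<rho>"] integral_mult[OF integrable_on_const[OF lmeasurable_cball], of "(norm c / 2)^2" c \<rho> 1]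
      by (simp add: mult.commute)
    moreover have "measure lebesgue (cball c \<rho>) * (norm c / 2)^2 > 0" using cbm cr(1) by simp
    ultimately show ?thesis by linarith
  qed
  have apos: "a > 0" using IDpos ID by simp
  have mp: "Tp$2$1 = 0" "Tp$2$2 > 0" using half_mat[OF assms(11)] by auto
  have mm: "Tm$2$1 = 0" "Tm$2$2 > 0" using half_mat'[OF assms(12)] by auto
  define d where "d = det Tp"
  have dm: "det Tm = d" using assms(13) by (simp add: d_def)
  have dnz: "d \<noteq> 0" using assms(8) by (simp add: d_def invertible_det_nz)
  define P Q where "P = (\<lambda>x. Tp *v x) ` U" and "Q = (\<lambda>x. Tm *v x) ` L"
  have TD: "pw_map Tp Tm ` D = P \<union> Q"
    by (auto simp: pw_map_def P_def Q_def U_def L_def image_def)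
  have P2: "\<And>y. y \<in> P \<Longrightarrow> y$2 \<ge> 0" using mp by (auto simp: P_def U_def mvec2)
  have Q2: "\<And>y. y \<in> Q \<Longrightarrow> y$2 < 0" using mm by (auto simp: Q_def L_def mvec2 mult_pos_neg)
  have PQ: "P \<inter> Q = {}" using P2 Q2 by force
  have linp: "linear (\<lambda>x. Tp *v x)" "linear (\<lambda>x. Tm *v x)" by (auto intro: matrix_vector_mul_linear)
  have PQm: "P \<in> lmeasurable" "Q \<in> lmeasurable"
    unfolding P_def Q_def using measurable_linear_image linp UL by blast+
  have PQb: "bounded P" "bounded Q"
    unfolding P_def Q_def using UL linp by (auto intro: bounded_linear_image simp: linear_conv_bounded_linear)
  have aUL: "area D = measure lebesgue U + measure lebesgue L"
  proof -
    have "D = U \<union> L" "U \<inter> L = {}" by (auto simp: U_def L_def)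
    then show ?thesis using measure_Un3[OF UL(1,2)] by (simp add: area_def)
  qed
  have aT: "area (pw_map Tp Tm ` D) = \<bar>d\<bar> * area D"
  proof -
    have "area (pw_map Tp Tm ` D) = measure lebesgue P + measure lebesgue Q"
      using measure_Un3[OF PQm] PQ by (simp add: area_def TD)
    also have "\<dots> = \<bar>d\<bar> * measure lebesgue U + \<bar>d\<bar> * measure lebesgue L"
      unfolding P_def Q_def using measure_linear_image[OF linp(1) UL(1)] measure_linear_image[OF linp(2) UL(2)]
      by (simp add: d_def dm)
    finally show ?thesis using aUL by (simp add: algebra_simps)
  qed
  have quadT: "integral S (\<lambda>x. norm (M *v x) ^ 2) = (a/2) * hs_norm M ^ 2"
    if "M$2$1 = 0" "S \<in> lmeasurable" "bounded S" "integral S (\<lambda>x. (x$1)^2) = a/2"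
       "integral S (\<lambda>x. (x$2)^2) = a/2" "integral S (\<lambda>x. x$1*x$2) = 0" for M :: "real^2^2" and S
  proof -
    have "integral S (\<lambda>x. norm (M *v x) ^ 2) = integral S (\<lambda>x. (M$1$1^2) * (x$1)^2 + (2*M$1$1*M$1$2)*(x$1*x$2) + (M$1$2^2 + M$2$2^2)*(x$2)^2)"
      by (rule integral_cong) (simp only: norm2_sq, simp add: mvec2 that(1) power2_eq_square algebra_simps)
    also have "\<dots> = (M$1$1^2) * (a/2) + (2*M$1$1*M$1$2)*0 + (M$1$2^2 + M$2$2^2)*(a/2)"
      using quad_int[OF that(2,3)] that(4-6) by simp
    finally show ?thesis by (simp add: hs2 that(1) algebra_simps)
  qed
  have IT: "inertia0 (pw_map Tp Tm ` D) = \<bar>d\<bar> * (a/2) * (hs_norm Tp ^ 2 + hs_norm Tm ^ 2)"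
  proof -
    have "inertia0 (pw_map Tp Tm ` D) = integral P (\<lambda>x. norm x ^ 2) + integral Q (\<lambda>x. norm x ^ 2)"
      unfolding inertia0_def TD using PQ
      by (intro integral_Un intg[OF nsq_c] PQm PQb) auto
    also have "\<dots> = \<bar>d\<bar> * integral U (\<lambda>x. norm (Tp *v x) ^ 2) + \<bar>d\<bar> * integral L (\<lambda>x. norm (Tm *v x) ^ 2)"
      unfolding P_def Q_def using int_lin[OF linp(1) nsq_c UL(1,3)] int_lin[OF linp(2) nsq_c UL(2,4)]
      by (simp add: d_def dm o_def)
    also have "\<dots> = \<bar>d\<bar> * ((a/2) * hs_norm Tp ^ 2) + \<bar>d\<bar> * ((a/2) * hs_norm Tm ^ 2)"
      using quadT[OF mp(1) UL(1,3) hU(1-3)] quadT[OF mm(1) UL(2,4) hU(4-6)] by (simp only:)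
    finally show ?thesis by (simp add: algebra_simps)
  qed
  have lhs: "(hs_norm (matrix_inv Tp) ^ 2 + hs_norm (matrix_inv Tm) ^ 2) / 4 = (hs_norm Tp ^ 2 + hs_norm Tm ^ 2) / (4 * d^2)"
    using hs_inv[OF assms(8)] hs_inv[OF assms(9)] by (simp add: d_def dm add_divide_distrib)
  have ad: "\<bar>d\<bar> > 0" using dnz by simp
  show ?thesis
    unfolding lhs IT aT ID using ad apos muD
    by (simp add: field_simps power2_eq_square power3_eq_cube abs_mult_self_eq)
qed

end
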